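(* Let $(G=(V,E),(p_e))$ be an IC model instance, $S\subseteq V$ with $S\neq V$, $\phi$ a realization, and $t\in\mathbb{Z}^+$. Let $\mathcal R$ be an RR-set generated with input $S,\phi,t$. Then for every $V^*\subseteq V$, \[(|V|-|S|)\cdot\mathbb{E}[\mathbb{I}(V^*\cap\mathcal R)]=\Delta f_t(S,V^*,\phi),\] where $\mathbb{I}(V^*\cap\mathcal R)=1$ if $V^*\cap\mathcal R\neq\emptyset$ and $0$ otherwise.
   Context: IC model: directed graph $G=(V,E)$, each edge $e$ independently live with probability $p_e\in(0,1]$. A realization is a pair $\phi=(L(\phi),D(\phi))$ of disjoint edge sets (known live, known dead edges); it is full if $L(\phi)\cup D(\phi)=E$; $\Psi$ is the set of full realizations. $\phi\prec\psi$ means $L(\phi)\subseteq L(\psi)$, $D(\phi)\subseteq D(\psi)$, and $\Pr[\psi\mid\phi]=\prod_{e\in L(\psi)\setminus L(\phi)}p_e\prod_{e\in D(\psi)\setminus D(\phi)}(1-p_e)$. For $S\subseteq V$ and full $\psi$, $A_t(S,\psi)$ is the set of nodes reachable from some node of $S$ via a path of at most $t$ edges all in $L(\psi)$. $\Delta_t(S,V^*,\psi)=|A_t(S\cup V^*,\psi)|-|A_t(S,\psi)|$ and $\Delta f_t(S,V^*,\phi)=\sum_{\psi\in\Psi,\phi\prec\psi}\Pr[\psi\mid\phi]\Delta_t(S,V^*,\psi)$. RR-set with input $S,\phi,t$: (1) for each edge not in $L(\phi)\cup D(\phi)$ sample its state independently (live w.p. $p_e$), keeping the states given by $\phi$ for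 the others, obtaining a full realization $\psi^*$; (2) choose a node $v\notin S$ uniformly at random and let $R_v$ be the set of nodes from which $v$ is reachable via a path of at most $t$ edges all live in $\psi^*$ (including $v$ itself); return $\mathcal R=R_v$ if $R_v\cap S=\emptyset$, and $\mathcal R=\emptyset$ otherwise. *)

theory Defs
  imports "HOL-Probability.Probability"
begin

text \<open>IC model on a directed graph with vertex set V and edge set E (pairs of vertices).
A realization is a pair (L, D) of disjoint edge sets (known live / known dead).\<close>

definition realization :: "('a \<times> 'a) set \<Rightarrow> ('a \<times> 'a) set \<times> ('a \<times> 'a) set \<Rightarrow> bool" where
  "realization E phi \<longleftrightarrow> fst phi \<subseteq> E \<and> snd phi \<subseteq> E \<and> fst phi \<inter> snd phi = {}"

definition full_realizations :: "('a \<times> 'a) set \<Rightarrow> (('a \<times> 'a) set \<times> ('a \<times> 'a) set) set" where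
  "full_realizations E = {psi. realization E psi \<and> fst psi \<union> snd psi = E}"

definition prec :: "('a \<times> 'a) set \<times> ('a \<times> 'a) set \<Rightarrow> ('a \<times> 'a) set \<times> ('a \<times> 'a) set \<Rightarrow> bool" where
  "prec phi psi \<longleftrightarrow> fst phi \<subseteq> fst psi \<and> snd phi \<subseteq> snd psi"

definition cond_prob :: "('a \<times> 'a \<Rightarrow> real) \<Rightarrow> ('a \<times> 'a) set \<times> ('a \<times> 'a) set
    \<Rightarrow> ('a \<times> 'a) set \<times> ('a \<times> 'a) set \<Rightarrow> real" where
  "cond_prob p psi phi =
     (\<Prod>e\<in>fst psi - fst phi. p e) * (\<Prod>e\<in>snd psi - snd phi. 1 - p e)"

fun live_walk :: "('a \<times> 'a) set \<Rightarrow> nat \<Rightarrow> 'a \<Rightarrow> 'a \<Rightarrow> bool" where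
  "live_walk L 0 u v \<longleftrightarrow> u = v"
| "live_walk L (Suc k) u v \<longleftrightarrow> (\<exists>w. (u, w) \<in> L \<and> live_walk L k w v)"

definition activated :: "nat \<Rightarrow> 'a set \<Rightarrow> ('a \<times> 'a) set \<times> ('a \<times> 'a) set \<Rightarrow> 'a set" where
  "activated t S psi = {v. \<exists>u\<in>S. \<exists>k\<le>t. live_walk (fst psi) k u v}"

definition marginal :: "nat \<Rightarrow> 'a set \<Rightarrow> 'a set \<Rightarrow> ('a \<times> 'a) set \<times> ('a \<times> 'a) set \<Rightarrow> real" where
  "marginal t S V' psi = real (card (activated t (S \<union> V') psi)) - real (card (activated t S psi))"

definition exp_marginal :: "('a \<times> 'a) set \<Rightarrow> ('a \<times> 'a \<Rightarrow> real) \<Rightarrow> nat \<Rightarrow> 'a set \<Rightarrow> 'a set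
    \<Rightarrow> ('a \<times> 'a) set \<times> ('a \<times> 'a) set \<Rightarrow> real" where
  "exp_marginal E p t S V' phi =
     (\<Sum>psi\<in>{psi\<in>full_realizations E. prec phi psi}. cond_prob p psi phi * marginal t S V' psi)"

definition rr_set :: "'a set \<Rightarrow> ('a \<times> 'a) set \<Rightarrow> ('a \<times> 'a \<Rightarrow> real) \<Rightarrow> 'a set
    \<Rightarrow> ('a \<times> 'a) set \<times> ('a \<times> 'a) set \<Rightarrow> nat \<Rightarrow> 'a set pmf" where
  "rr_set V E p S phi t =
     bind_pmf (Pi_pmf (E - (fst phi \<union> snd phi)) False (\<lambda>e. bernoulli_pmf (p e))) (\<lambda>f.
     bind_pmf (pmf_of_set (V - S)) (\<lambda>v.
       let Lpsi = fst phi \<union> {e \<in> E - (fst phi \<union> snd phi). f e};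
           R = {u. \<exists>k\<le>t. live_walk Lpsi k u v}
       in return_pmf (if R \<inter> S = {} then R else {})))"

end

theory Submission
  imports Defs
begin

lemma walk_in_V:
  assumes "L \<subseteq> V \<times> V" "live_walk L k u v" "u \<in> V"
  shows "v \<in> V"
  using assms(2,3)
proof (induction k arbitrary: u)
  case 0 then show ?case by simp
next
  case (Suc k)
  then obtain w where "(u, w) \<in> L" "live_walk L k w v" by auto
  then show ?case using Suc assms(1) by blast
qed

lemma marginal_eq:
  assumes "finite V" "L \<subseteq> V \<times> V" "S \<subseteq> V" "V' \<subseteq> V"
  shows "marginal t S V' (L, D) = real (card {v \<in> V - S.
      {u. \<exists>k\<le>t. live_walk L k u v} \<inter> S = {} \<and> V' \<inter> {u. \<exists>k\<le>t. live_walk L k u v} \<noteq> {}})"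
proof -
  let ?A1 = "activated t S (L, D)"
  let ?A2 = "activated t (S \<union> V') (L, D)"
  have sub2: "?A2 \<subseteq> V" using walk_in_V[OF assms(2)] assms(3,4)
    unfolding activated_def by auto
  have sub: "?A1 \<subseteq> ?A2" unfolding activated_def by auto
  have fin2: "finite ?A2" using sub2 assms(1) finite_subset by blast
  have "card (?A2 - ?A1) = card ?A2 - card ?A1"
    using card_Diff_subset[OF finite_subset[OF sub fin2] sub] .
  moreover have "card ?A1 \<le> card ?A2" using card_mono[OF fin2 sub] .
  moreover have "?A2 - ?A1 = {v \<in> V - S.
      {u. \<exists>k\<le>t. live_walk L k u v} \<inter> S = {} \<and> V' \<inter> {u. \<exists>k\<le>t. live_walk L k u v} \<noteq> {}}"
  proof (intro equalityI subsetI)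
    fix v assume v: "v \<in> ?A2 - ?A1"
    have "v \<notin> S"
    proof
      assume "v \<in> S"
      then have "v \<in> ?A1" unfolding activated_def
        by (auto intro!: bexI[of _ v] exI[of _ 0])
      then show False using v by blast
    qed
    then show "v \<in> {v \<in> V - S.
      {u. \<exists>k\<le>t. live_walk L k u v} \<inter> S = {} \<and> V' \<inter> {u. \<exists>k\<le>t. live_walk L k u v} \<noteq> {}}"
      using v sub2 unfolding activated_def by auto
  next
    fix v assume "v \<in> {v \<in> V - S.
      {u. \<exists>k\<le>t. live_walk L k u v} \<inter> S = {} \<and> V' \<inter> {u. \<exists>k\<le>t. live_walk L k u v} \<noteq> {}}"
    then show "v \<in> ?A2 - ?A1" unfolding activated_def by auto
  qed
  ultimately show ?thesis unfolding marginal_def by (simp add: of_nat_diff)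
qed

theorem lemma5:
  fixes V :: "'a set" and E :: "('a \<times> 'a) set" and p :: "'a \<times> 'a \<Rightarrow> real"
    and S V' :: "'a set" and phi :: "('a \<times> 'a) set \<times> ('a \<times> 'a) set" and t :: nat
  assumes "finite V" and "E \<subseteq> V \<times> V"
    and "\<And>e. e \<in> E \<Longrightarrow> 0 < p e \<and> p e \<le> 1"
    and "S \<subseteq> V" and "S \<noteq> V"
    and "realization E phi"
    and "t \<ge> 1"
    and "V' \<subseteq> V"
  shows "real (card V - card S) *
           measure_pmf.expectation (rr_set V E p S phi t) (\<lambda>R. if V' \<inter> R \<noteq> {} then 1 else 0)
         = exp_marginal E p t S V' phi"
proof -
  obtain L0 D0 where phi: "phi = (L0, D0)" by fastforce
  define U where "U = E - (L0 \<union> D0)"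
  define F where "F = PiE_dflt U False (\<lambda>_. (UNIV :: bool set))"
  define Lf where "Lf f = L0 \<union> {e \<in> U. f e}" for f :: "'a \<times> 'a \<Rightarrow> bool"
  define Rv where "Rv L v = {u. \<exists>k\<le>t. live_walk L k u v}" for L and v :: 'a
  define g where "g L = card {v \<in> V - S. Rv L v \<inter> S = {} \<and> V' \<inter> Rv L v \<noteq> {}}" for L
  define P where "P = Pi_pmf U False (\<lambda>e. bernoulli_pmf (p e))"
  have finE: "finite E" using assms(1,2) finite_subset by (metis finite_SigmaI)
  have finU: "finite U" unfolding U_def using finE by simp
  have finF: "finite F" unfolding F_def using finU by auto
  have VS: "V - S \<noteq> {}" "finite (V - S)" using assms(1,4,5) by auto
  have cardVS: "card V - card S = card (V - S)" using assms(1,4) by (simp add: card_Diff_subset finite_subset)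
  have L0E: "L0 \<subseteq> E" "D0 \<subseteq> E" "L0 \<inter> D0 = {}" using assms(6) unfolding phi realization_def by auto
  have rr: "rr_set V E p S phi t = P \<bind> (\<lambda>f. pmf_of_set (V - S) \<bind> (\<lambda>v.
      return_pmf (if Rv (Lf f) v \<inter> S = {} then Rv (Lf f) v else {})))"
    unfolding rr_set_def phi P_def U_def Lf_def Rv_def Let_def fst_conv snd_conv by (rule refl)
  have inner: "measure_pmf.expectation (pmf_of_set (V - S) \<bind> (\<lambda>v.
      return_pmf (if Rv (Lf f) v \<inter> S = {} then Rv (Lf f) v else {}))) (\<lambda>R. if V' \<inter> R \<noteq> {} then 1 else 0)
      = real (g (Lf f)) / real (card (V - S))" for f
  proof -
    have "measure_pmf.expectation (pmf_of_set (V - S) \<bind> (\<lambda>v.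
      return_pmf (if Rv (Lf f) v \<inter> S = {} then Rv (Lf f) v else {}))) (\<lambda>R. if V' \<inter> R \<noteq> {} then 1 else 0)
      = (\<Sum>v\<in>V - S. (if Rv (Lf f) v \<inter> S = {} \<and> V' \<inter> Rv (Lf f) v \<noteq> {} then 1 else 0) / real (card (V - S)))"
      using VS by (subst pmf_expectation_bind_pmf_of_set) (auto intro!: sum.cong simp: divide_inverse)
    also have "\<dots> = (\<Sum>v\<in>V - S. (if Rv (Lf f) v \<inter> S = {} \<and> V' \<inter> Rv (Lf f) v \<noteq> {} then 1 else 0)) / real (card (V - S))"
      by (simp add: sum_divide_distrib[symmetric])
    also have "\<dots> = real (g (Lf f)) / real (card (V - S))"
      unfolding g_def sum.inter_filter[OF VS(2), symmetric] by simp
    finally show ?thesis .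
  qed
  have "measure_pmf.expectation (rr_set V E p S phi t) (\<lambda>R. if V' \<inter> R \<noteq> {} then 1 else 0)
     = (\<Sum>f\<in>F. pmf P f * (real (g (Lf f)) / real (card (V - S))))"
    unfolding rr
    apply (subst pmf_expectation_bind[of F])
    using finF VS set_Pi_pmf_subset[OF finU, of False "\<lambda>e. bernoulli_pmf (p e)"]
    by (auto simp: inner P_def F_def PiE_dflt_def)
  then have lhs: "real (card V - card S) *
           measure_pmf.expectation (rr_set V E p S phi t) (\<lambda>R. if V' \<inter> R \<noteq> {} then 1 else 0)
     = (\<Sum>f\<in>F. pmf P f * real (g (Lf f)))"
    using VS by (simp add: cardVS sum_distrib_left)
  define psi_of where "psi_of f = (L0 \<union> {e \<in> U. f e}, D0 \<union> {e \<in> U. \<not> f e})" for f :: "'a \<times> 'a \<Rightarrow> bool"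
  have bij: "bij_betw psi_of F {psi\<in>full_realizations E. prec phi psi}"
  proof (rule bij_betw_byWitness[where f' = "\<lambda>psi e. e \<in> U \<and> e \<in> fst psi"])
    show "\<forall>f\<in>F. (\<lambda>e. e \<in> U \<and> e \<in> fst (psi_of f)) = f"
      unfolding F_def PiE_dflt_def psi_of_def U_def by (auto simp: fun_eq_iff)
    show "\<forall>psi\<in>{psi\<in>full_realizations E. prec phi psi}. psi_of (\<lambda>e. e \<in> U \<and> e \<in> fst psi) = psi"
      unfolding psi_of_def U_def full_realizations_def realization_def prec_def phi
      by (auto simp: prod_eq_iff)
    show "psi_of ` F \<subseteq> {psi\<in>full_realizations E. prec phi psi}"
      using L0E unfolding psi_of_def U_def full_realizations_def realization_def prec_def phi by auto
    show "(\<lambda>psi e. e \<in> U \<and> e \<in> fst psi) ` {psi\<in>full_realizations E. prec phi psi} \<subseteq> F"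
      unfolding F_def PiE_dflt_def by auto
  qed
  have "exp_marginal E p t S V' phi = (\<Sum>f\<in>F. cond_prob p (psi_of f) phi * marginal t S V' (psi_of f))"
    unfolding exp_marginal_def by (rule sum.reindex_bij_betw[OF bij, symmetric])
  also have "\<dots> = (\<Sum>f\<in>F. pmf P f * real (g (Lf f)))"
  proof (rule sum.cong[OF refl])
    fix f assume f: "f \<in> F"
    have LfV: "Lf f \<subseteq> V \<times> V" using L0E assms(2) unfolding Lf_def U_def by auto
    have m: "marginal t S V' (psi_of f) = real (g (Lf f))"
      unfolding psi_of_def g_def Rv_def
      using marginal_eq[OF assms(1) LfV assms(4,8)] by (simp add: Lf_def)
    have "pmf P f = (\<Prod>e\<in>U. if f e then p e else 1 - p e)"
      unfolding P_def using f finU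
      apply (subst pmf_Pi')
        apply (auto simp: F_def PiE_dflt_def U_def intro!: prod.cong)[2]
      apply (rule prod.cong[OF refl])
      subgoal for e using assms(3)[of e] by (cases "f e") (auto simp: U_def)
      done
    also have "\<dots> = cond_prob p (psi_of f) phi"
      unfolding cond_prob_def psi_of_def phi using finU
      by (subst prod.If_cases) (auto simp: U_def intro!: arg_cong2[where f="(*)"] prod.cong)
    finally show "cond_prob p (psi_of f) phi * marginal t S V' (psi_of f) = pmf P f * real (g (Lf f))"
      using m by simp
  qed
  finally show ?thesis using lhs by simp
qed

end
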